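(* Let $g$ be an even $C^1$ function near $0\in\mathbb{C}$ which is homogeneous of degree $m>1$ (i.e. $g(tz)=t^m g(z)$ for all $t>0$), and suppose $g$ satisfies the polynomial condition with respect to an odd polynomial $p=p_{2s-1}+p_{2s+1}+\cdots+p_{2n-1}$, where each $p_k$ is a homogeneous holomorphic polynomial of degree $k$ and $p_{2s-1}\neq 0$. Then $p_{2s-1}$ is complex-symmetric, and $$\operatorname{Im}\Bigl(\frac{\partial p_{2s-1}}{\partial\zeta_2}(z,\bar z)\cdot g(z)\Bigr)\ge 0\quad\text{for all } z\in\Gamma,$$ where $\Gamma$ is the unit circle.
   Context: Polynomial condition: let $g$ be an even $C^1$ function defined near $0\in\mathbb{C}$ with $g(z)=o(z)$ as $z\to0$. We say $g$ satisfies the polynomial condition with respect to a holomorphic polynomial $p(\zeta_1,\zeta_2)$ if for every $C^1$ function $R$ defined near $0$ with $R(z)=o(g(z))$ as $z\to0$, both $\operatorname{Im} p(z,\bar z+g(z)+R(z))>0$ and $\operatorname{Im} p(z,\bar z-g(z)+R(z))<0$ hold for all $z\neq0$ sufficiently close to $0$. A homogeneous polynomial $q(\zeta_1,\zeta_2)=\sum_{k=0}^{d}a_k\zeta_1^k\zeta_2^{d-k}$ of degree $d$ is called complex-symmetric if $a_k=\overline{a_{d-k}}$ for all $k=0,\dots,d$ (equivalently, $q(z,\bar z)$ is real for all $z\in\mathbb{C}$). *)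

theory Defs
  imports "HOL-Analysis.Analysis" "HOL-Library.Landau_Symbols"
begin

definition C1_near0 :: "(complex \<Rightarrow> complex) \<Rightarrow> bool" where
  "C1_near0 f \<longleftrightarrow> (\<exists>r>0. \<exists>D :: complex \<Rightarrow> (complex \<Rightarrow>\<^sub>L complex).
      (\<forall>z\<in>ball 0 r. (f has_derivative blinfun_apply (D z)) (at z)) \<and>
      continuous_on (ball 0 r) D)"

text \<open>A holomorphic polynomial p in two variables, given by its coefficients:
  c i j is the coefficient of zeta1^i zeta2^j, total degree at most N.\<close>
definition poly2 :: "(nat \<Rightarrow> nat \<Rightarrow> complex) \<Rightarrow> nat \<Rightarrow> complex \<Rightarrow> complex \<Rightarrow> complex" where
  "poly2 c N z w = (\<Sum>i\<le>N. \<Sum>j\<le>N - i. c i j * z ^ i * w ^ j)"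

definition hpart :: "(nat \<Rightarrow> nat \<Rightarrow> complex) \<Rightarrow> nat \<Rightarrow> complex \<Rightarrow> complex \<Rightarrow> complex" where
  "hpart c k z w = (\<Sum>i\<le>k. c i (k - i) * z ^ i * w ^ (k - i))"

text \<open>Complex-symmetric homogeneous polynomial of degree d with coefficients a k
  (coefficient of zeta1^k zeta2^(d-k)).\<close>
definition complex_symmetric :: "(nat \<Rightarrow> complex) \<Rightarrow> nat \<Rightarrow> bool" where
  "complex_symmetric a d \<longleftrightarrow> (\<forall>k\<le>d. a k = cnj (a (d - k)))"

definition polynomial_condition ::
  "(complex \<Rightarrow> complex) \<Rightarrow> (complex \<Rightarrow> complex \<Rightarrow> complex) \<Rightarrow> bool" where
  "polynomial_condition g P \<longleftrightarrow>
     (\<forall>R. C1_near0 R \<and> R \<in> o[at 0](g) \<longrightarrow>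
        (\<forall>\<^sub>F z in at 0. Im (P z (cnj z + g z + R z)) > 0 \<and>
                        Im (P z (cnj z - g z + R z)) < 0))"

end

theory Submission
  imports Defs
begin

lemma sum_collapse:
  fixes c :: "nat \<Rightarrow> nat \<Rightarrow> complex"
  assumes c0: "\<forall>i j. i + j < d \<longrightarrow> c i j = 0" and dN: "d \<le> N"
  shows "(\<Sum>i\<le>N. \<Sum>j\<le>N-i. c i j * 0^(i+j-d) * F i j) = (\<Sum>i\<le>d. c i (d-i) * F i (d-i))"
proof -
  have "(\<Sum>i\<le>N. \<Sum>j\<le>N-i. c i j * 0^(i+j-d) * F i j)
      = (\<Sum>i\<le>N. if i \<le> d then (\<Sum>j\<le>N-i. if j = d - i then c i (d-i) * F i (d-i) else 0) else 0)"
  proof (rule sum.cong[OF refl])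
    fix i assume "i \<in> {..N}"
    show "(\<Sum>j\<le>N-i. c i j * 0^(i+j-d) * F i j)
      = (if i \<le> d then (\<Sum>j\<le>N-i. if j = d - i then c i (d-i) * F i (d-i) else 0) else 0)"
    proof (cases "i \<le> d")
      case True
      have eq: "(\<Sum>j\<le>N-i. c i j * 0^(i+j-d) * F i j) = (\<Sum>j\<le>N-i. if j = d - i then c i (d-i) * F i (d-i) else 0)"
        apply (rule sum.cong[OF refl])
        subgoal for j using c0[rule_format, of i j] True by (cases "i + j < d") auto
        done
      then show ?thesis using True by (simp only: if_True)
    next
      case False
      then show ?thesis by (auto intro!: sum.neutral)
    qed
  qed
  also have "\<dots> = (\<Sum>i\<le>N. if i \<le> d then c i (d-i) * F i (d-i) else 0)"
    by (rule sum.cong[OF refl]) (use dN in auto)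
  also have "\<dots> = (\<Sum>i\<in>{i\<in>{..N}. i \<le> d}. c i (d-i) * F i (d-i))"
    by (rule sum.inter_filter[symmetric]) simp
  also have "{i\<in>{..N}. i \<le> d} = {..d}" using dN by auto
  finally show ?thesis .
qed

lemma ray:
  fixes g :: "complex \<Rightarrow> complex" and m :: real and c :: "nat \<Rightarrow> nat \<Rightarrow> complex"
  assumes m_gt: "m > 1"
    and g_hom: "\<forall>t>0. \<forall>z. g (complex_of_real t * z) = complex_of_real (t powr m) * g z"
    and c0: "\<forall>i j. i + j < d \<longrightarrow> c i j = 0" and dN: "d \<le> N" and w0: "w0 \<noteq> 0"
    and ev: "\<forall>\<^sub>F z in at 0. Im (poly2 c N z (cnj z + g z)) > 0 \<and> Im (poly2 c N z (cnj z - g z)) < 0"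
  shows "Im (hpart c d w0 (cnj w0)) = 0 \<and>
    Im ((\<Sum>i\<le>d. c i (d-i) * w0^i * (of_nat (d-i) * cnj w0^(d-i-1))) * g w0) \<ge> 0"
proof -
  define a where "a = cnj w0"
  define G where "G = g w0"
  define \<tau> where "\<tau> t = complex_of_real (t powr (m-1))" for t
  define H where "H e t = (\<Sum>i\<le>N. \<Sum>j\<le>N-i. c i j * complex_of_real t^(i+j-d) * (w0^i * (a + e * \<tau> t * G)^j))" for e t
  define K where "K t = (\<Sum>i\<le>N. \<Sum>j\<le>N-i. c i j * complex_of_real t^(i+j-d) *
      (w0^i * (\<Sum>k<j. (a - \<tau> t * G)^(j - Suc k) * (a + \<tau> t * G)^k)))" for t
  have fact1: "poly2 c N (complex_of_real t * w0) (cnj (complex_of_real t * w0) + e * g (complex_of_real t * w0))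
      = complex_of_real t ^ d * H e t" if t: "t > 0" for t e
  proof -
    have "g (complex_of_real t * w0) = complex_of_real (t powr m) * G"
      using g_hom t by (simp add: G_def)
    also have "t powr m = t * t powr (m - 1)"
      using t by (simp add: powr_mult_base)
    finally have gt: "g (complex_of_real t * w0) = complex_of_real t * (\<tau> t * G)"
      by (simp add: \<tau>_def)
    have arg: "cnj (complex_of_real t * w0) + e * g (complex_of_real t * w0) = complex_of_real t * (a + e * \<tau> t * G)"
      unfolding gt by (simp add: a_def algebra_simps)
    show ?thesis
      unfolding arg poly2_def H_def sum_distrib_left
    proof (intro sum.cong refl)
      fix i j
      show "c i j * (complex_of_real t * w0) ^ i * (complex_of_real t * (a + e * \<tau> t * G)) ^ j =
         complex_of_real t ^ d * (c i j * complex_of_real t ^ (i + j - d) * (w0 ^ i * (a + e * \<tau> t * G) ^ j))"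
      proof (cases "i + j < d")
        case True then show ?thesis using c0 by simp
      next
        case False
        then have "complex_of_real t ^ (i + j) = complex_of_real t ^ d * complex_of_real t ^ (i + j - d)"
          by (simp flip: power_add)
        moreover have "c i j * (complex_of_real t * w0) ^ i * (complex_of_real t * (a + e * \<tau> t * G)) ^ j
          = c i j * complex_of_real t ^ (i + j) * (w0 ^ i * (a + e * \<tau> t * G) ^ j)"
          by (simp only: power_mult_distrib power_add mult_ac)
        ultimately show ?thesis by (simp only: mult_ac)
      qed
    qed
  qed
  have fact2: "H 1 t - H (-1) t = 2 * \<tau> t * G * K t" for t
  proof -
    have "H 1 t - H (-1) t = (\<Sum>i\<le>N. \<Sum>j\<le>N-i. c i j * complex_of_real t^(i+j-d) * (w0^i * (a + 1 * \<tau> t * G)^j)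
        - c i j * complex_of_real t^(i+j-d) * (w0^i * (a + (-1) * \<tau> t * G)^j))"
      unfolding H_def by (simp only: sum_subtractf)
    also have "\<dots> = (\<Sum>i\<le>N. \<Sum>j\<le>N-i. 2 * \<tau> t * G * (c i j * complex_of_real t^(i+j-d) *
      (w0^i * (\<Sum>k<j. (a - \<tau> t * G)^(j - Suc k) * (a + \<tau> t * G)^k))))"
    proof (intro sum.cong refl)
      fix i j
      have "(a + \<tau> t * G)^j - (a - \<tau> t * G)^j = (2 * \<tau> t * G) * (\<Sum>k<j. (a - \<tau> t * G)^(j - Suc k) * (a + \<tau> t * G)^k)"
        by (subst power_diff_sumr2) simp
      then show "c i j * complex_of_real t ^ (i + j - d) * (w0 ^ i * (a + 1 * \<tau> t * G) ^ j) -
         c i j * complex_of_real t ^ (i + j - d) * (w0 ^ i * (a + - 1 * \<tau> t * G) ^ j) =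
         2 * \<tau> t * G * (c i j * complex_of_real t ^ (i + j - d) *
           (w0 ^ i * (\<Sum>k<j. (a - \<tau> t * G) ^ (j - Suc k) * (a + \<tau> t * G) ^ k)))"
        by (simp add: algebra_simps)
    qed
    also have "\<dots> = 2 * \<tau> t * G * K t"
      unfolding K_def by (simp only: sum_distrib_left)
    finally show ?thesis .
  qed
  have tau0: "(\<tau> \<longlongrightarrow> 0) (at_right 0)"
  proof -
    have "((\<lambda>t::real. t powr (m - 1)) \<longlongrightarrow> 0) (at_right 0)"
      apply (rule tendsto_zero_powrI[of "\<lambda>t. t" _ "\<lambda>_. m - 1" "m - 1"])
      using m_gt by (auto intro!: tendsto_ident_at eventually_mono[OF eventually_at_right_less])
    from tendsto_of_real[OF this, where 'a=complex] show ?thesis unfolding \<tau>_def by simp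
  qed
  have Hlim: "(H e \<longlongrightarrow> hpart c d w0 a) (at_right 0)" for e
  proof -
    have "(H e \<longlongrightarrow> (\<Sum>i\<le>N. \<Sum>j\<le>N-i. c i j * complex_of_real 0^(i+j-d) * (w0^i * (a + e * 0 * G)^j))) (at_right 0)"
      unfolding H_def by (intro tendsto_intros tau0)
    also have "(\<Sum>i\<le>N. \<Sum>j\<le>N-i. c i j * complex_of_real 0^(i+j-d) * (w0^i * (a + e * 0 * G)^j)) = hpart c d w0 a"
      using sum_collapse[OF c0 dN, of "\<lambda>i j. w0^i * a^j"] by (simp add: hpart_def mult.assoc)
    finally show ?thesis .
  qed
  have Klim: "(K \<longlongrightarrow> (\<Sum>i\<le>d. c i (d-i) * w0^i * (of_nat (d-i) * a^(d-i-1)))) (at_right 0)"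
  proof -
    have "(K \<longlongrightarrow> (\<Sum>i\<le>N. \<Sum>j\<le>N-i. c i j * complex_of_real 0^(i+j-d) *
      (w0^i * (\<Sum>k<j. (a - 0 * G)^(j - Suc k) * (a + 0 * G)^k)))) (at_right 0)"
      unfolding K_def by (intro tendsto_intros tau0)
    also have "(\<Sum>i\<le>N. \<Sum>j\<le>N-i. c i j * complex_of_real 0^(i+j-d) *
      (w0^i * (\<Sum>k<j. (a - 0 * G)^(j - Suc k) * (a + 0 * G)^k))) =
      (\<Sum>i\<le>N. \<Sum>j\<le>N-i. c i j * 0^(i+j-d) * (w0^i * (of_nat j * a^(j-1))))"
    proof (intro sum.cong refl)
      fix i j
      have "(\<Sum>k<j. a^(j - Suc k) * a^k) = (\<Sum>k<j. a^(j-1))"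
        by (intro sum.cong refl) (auto simp flip: power_add)
      then show "c i j * complex_of_real 0^(i+j-d) * (w0^i * (\<Sum>k<j. (a - 0 * G)^(j - Suc k) * (a + 0 * G)^k))
        = c i j * 0^(i+j-d) * (w0^i * (of_nat j * a^(j-1)))" by simp
    qed
    also have "\<dots> = (\<Sum>i\<le>d. c i (d-i) * w0^i * (of_nat (d-i) * a^(d-i-1)))"
      using sum_collapse[OF c0 dN, of "\<lambda>i j. w0^i * (of_nat j * a^(j-1))"] by (simp add: mult.assoc)
    finally show ?thesis .
  qed
  have ray_lim: "filterlim (\<lambda>t. complex_of_real t * w0) (at 0) (at_right 0)"
  proof (rule filterlim_atI)
    show "((\<lambda>t. complex_of_real t * w0) \<longlongrightarrow> 0) (at_right 0)"
      by (rule tendsto_eq_intros) (auto intro!: tendsto_eq_intros tendsto_ident_at)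
    show "\<forall>\<^sub>F t in at_right 0. complex_of_real t * w0 \<noteq> 0"
      using w0 by (auto intro: eventually_mono[OF eventually_at_right_less])
  qed
  have ev2: "\<forall>\<^sub>F t in at_right (0::real). t > 0 \<and> Im (H 1 t) > 0 \<and> Im (H (-1) t) < 0"
  proof -
    have "\<forall>\<^sub>F t in at_right (0::real). t > 0 \<and>
       Im (poly2 c N (complex_of_real t * w0) (cnj (complex_of_real t * w0) + g (complex_of_real t * w0))) > 0 \<and>
       Im (poly2 c N (complex_of_real t * w0) (cnj (complex_of_real t * w0) - g (complex_of_real t * w0))) < 0"
      using eventually_at_right_less filterlim_iff[THEN iffD1, OF ray_lim, rule_format, OF ev]
      by eventually_elim auto
    then show ?thesis
    proof eventually_elim
      case (elim t)
      then have t: "t > 0" by simp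
      have "Im (poly2 c N (complex_of_real t * w0) (cnj (complex_of_real t * w0) + 1 * g (complex_of_real t * w0))) > 0"
        using elim by simp
      then have 1: "t ^ d * Im (H 1 t) > 0" unfolding fact1[OF t]
        by (simp flip: of_real_power)
      have "Im (poly2 c N (complex_of_real t * w0) (cnj (complex_of_real t * w0) + (-1) * g (complex_of_real t * w0))) < 0"
        using elim by simp
      then have 2: "t ^ d * Im (H (-1) t) < 0" unfolding fact1[OF t]
        by (simp flip: of_real_power)
      have "t ^ d > 0" using t by simp
      then show ?case using 1 2 t by (simp add: zero_less_mult_iff mult_less_0_iff)
    qed
  qed
  have A: "Im (hpart c d w0 a) \<ge> 0"
    by (rule tendsto_lowerbound[OF tendsto_Im[OF Hlim[of 1]]])
       (use ev2 in \<open>auto elim: eventually_mono\<close>)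
  have B: "Im (hpart c d w0 a) \<le> 0"
    by (rule tendsto_upperbound[OF tendsto_Im[OF Hlim[of "-1"]]])
       (use ev2 in \<open>auto elim: eventually_mono\<close>)
  have C: "Im ((\<Sum>i\<le>d. c i (d-i) * w0^i * (of_nat (d-i) * a^(d-i-1))) * G) \<ge> 0"
  proof (rule tendsto_lowerbound[OF tendsto_Im[OF tendsto_mult[OF Klim tendsto_const]]])
    show "\<forall>\<^sub>F t in at_right 0. 0 \<le> Im (K t * G)"
      using ev2
    proof eventually_elim
      case (elim t)
      have "Im (H 1 t - H (-1) t) > 0" using elim by simp
      then have "Im (complex_of_real (2 * t powr (m-1)) * (G * K t)) > 0"
        unfolding fact2 \<tau>_def by (simp add: algebra_simps)
      then have "2 * t powr (m-1) * Im (G * K t) > 0" by simp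
      moreover have "2 * t powr (m-1) > 0" using elim by simp
      ultimately show ?case by (simp add: zero_less_mult_iff mult.commute)
    qed
  qed simp
  show ?thesis using A B C by (simp add: a_def G_def)
qed

lemma hpart_deriv:
  "deriv (\<lambda>w. hpart c d z w) x = (\<Sum>i\<le>d. c i (d-i) * z^i * (of_nat (d-i) * x^(d-i-1)))"
proof (rule DERIV_imp_deriv)
  show "((\<lambda>w. hpart c d z w) has_field_derivative (\<Sum>i\<le>d. c i (d-i) * z^i * (of_nat (d-i) * x^(d-i-1)))) (at x)"
    unfolding hpart_def by (intro derivative_eq_intros) auto
qed

lemma infinite_circle: "infinite (sphere (0::complex) 1)"
proof
  assume "finite (sphere (0::complex) 1)"
  moreover have "connected (sphere (0::complex) 1)"
    by (rule connected_sphere) simp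
  ultimately have "sphere (0::complex) 1 = {} \<or> (\<exists>a. sphere (0::complex) 1 = {a})"
    using connected_finite_iff_sing by blast
  moreover have "1 \<in> sphere (0::complex) 1" "-1 \<in> sphere (0::complex) 1" by auto
  ultimately show False by (metis empty_iff singletonD one_neq_neg_one)
qed

lemma symmetric_from_real:
  fixes c :: "nat \<Rightarrow> nat \<Rightarrow> complex"
  assumes re: "\<forall>w. norm w = 1 \<longrightarrow> Im (hpart c d w (cnj w)) = 0"
  shows "complex_symmetric (\<lambda>k. c k (d - k)) d"
proof -
  define A where "A k = c k (d - k)" for k
  define B where "B k = A k - cnj (A (d - k))" for k
  have "sphere 0 1 \<subseteq> {x. (\<Sum>k\<le>d. B k * x ^ k) = 0}"
  proof
    fix x :: complex assume x: "x \<in> sphere 0 1"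
    define w where "w = csqrt x"
    have w1: "norm w = 1" using x by (simp add: w_def norm_csqrt)
    have ww: "w * cnj w = 1"
      using complex_norm_square[of w] w1 by simp
    have w2: "w^2 = x" by (simp add: w_def)
    have hr: "cnj (hpart c d w (cnj w)) = hpart c d w (cnj w)"
      using re w1 by (simp add: complex_eq_iff)
    have "cnj (hpart c d w (cnj w)) = (\<Sum>k\<le>d. cnj (A k) * cnj w ^ k * w ^ (d - k))"
      by (simp add: hpart_def A_def)
    also have "\<dots> = (\<Sum>k\<le>d. cnj (A (d - k)) * w ^ k * cnj w ^ (d - k))"
      by (rule sum.reindex_bij_witness[of _ "\<lambda>k. d - k" "\<lambda>k. d - k"]) auto
    finally have e: "(\<Sum>k\<le>d. A k * w ^ k * cnj w ^ (d - k)) = (\<Sum>k\<le>d. cnj (A (d - k)) * w ^ k * cnj w ^ (d - k))"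
      using hr by (simp add: hpart_def A_def)
    have "(\<Sum>k\<le>d. B k * w ^ k * cnj w ^ (d - k)) = 0"
      unfolding B_def using e by (simp only: left_diff_distrib sum_subtractf diff_self)
    then have "w ^ d * (\<Sum>k\<le>d. B k * w ^ k * cnj w ^ (d - k)) = 0" by simp
    moreover have "w ^ d * (\<Sum>k\<le>d. B k * w ^ k * cnj w ^ (d - k)) = (\<Sum>k\<le>d. B k * x ^ k)"
      unfolding sum_distrib_left
    proof (intro sum.cong refl)
      fix k assume "k \<in> {..d}"
      then have "d = k + (d - k)" by simp
      then have "w ^ d * (B k * w ^ k * cnj w ^ (d - k)) = B k * (w^k * w^k) * ((w * cnj w) ^ (d - k))"
      proof -
        have "w ^ d = w ^ k * w ^ (d - k)" using power_add[of w k "d - k"] \<open>d = k + (d - k)\<close> by simp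
        then have "w ^ d * (B k * w ^ k * cnj w ^ (d - k)) = B k * (w^k * w^k) * (w ^ (d - k) * cnj w ^ (d - k))"
          by (simp only: mult_ac)
        then show ?thesis by (simp only: power_mult_distrib)
      qed
      also have "w^k * w^k = x^k" unfolding w2[symmetric]
        by (simp only: power_mult_distrib[symmetric] power2_eq_square)
      also have "(w * cnj w) ^ (d - k) = 1" by (simp only: ww power_one)
      also have "B k * x ^ k * 1 = B k * x ^ k" by simp
      finally show "w ^ d * (B k * w ^ k * cnj w ^ (d - k)) = B k * x ^ k" .
    qed
    ultimately show "x \<in> {x. (\<Sum>k\<le>d. B k * x ^ k) = 0}" by simp
  qed
  then have "infinite {x. (\<Sum>k\<le>d. B k * x ^ k) = 0}"
    using infinite_circle finite_subset by blast
  then have "\<forall>k\<le>d. B k = 0" using polyfun_finite_roots by blast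
  then show ?thesis unfolding complex_symmetric_def B_def A_def by simp
qed

theorem mainTheorem4:
  fixes g :: "complex \<Rightarrow> complex" and m :: real
    and c :: "nat \<Rightarrow> nat \<Rightarrow> complex" and N s :: nat
  assumes g_C1: "C1_near0 g"
    and g_even: "\<forall>z. g (- z) = g z"
    and g_small: "g \<in> o[at 0](\<lambda>z. z)"
    and m_gt: "m > 1"
    and g_hom: "\<forall>t>0. \<forall>z. g (complex_of_real t * z) = complex_of_real (t powr m) * g z"
    and s_pos: "s \<ge> 1"
    and p_odd: "\<forall>i j. even (i + j) \<longrightarrow> c i j = 0"
    and p_low: "\<forall>i j. i + j < 2 * s - 1 \<longrightarrow> c i j = 0"
    and p_lead_nz: "\<exists>i\<le>2 * s - 1. c i (2 * s - 1 - i) \<noteq> 0"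
    and pc: "polynomial_condition g (poly2 c N)"
  shows "complex_symmetric (\<lambda>k. c k (2 * s - 1 - k)) (2 * s - 1) \<and>
         (\<forall>z. norm z = 1 \<longrightarrow>
            Im (deriv (\<lambda>w. hpart c (2 * s - 1) z w) (cnj z) * g z) \<ge> 0)"
proof -
  have C1: "C1_near0 (\<lambda>_. 0)"
    unfolding C1_near0_def
    by (rule exI[of _ 1], simp, rule exI[of _ "\<lambda>_. 0"]) (simp add: zero_blinfun.rep_eq)
  have ev: "\<forall>\<^sub>F z in at 0. Im (poly2 c N z (cnj z + g z)) > 0 \<and> Im (poly2 c N z (cnj z - g z)) < 0"
    using pc[unfolded polynomial_condition_def, rule_format, of "\<lambda>_. 0"] C1 zero_in_smallo by simp
  have dN: "2 * s - 1 \<le> N"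
  proof (rule ccontr)
    assume "\<not> 2 * s - 1 \<le> N"
    then have "poly2 c N z w = 0" for z w
      unfolding poly2_def using p_low by (intro sum.neutral ballI) auto
    then have "\<forall>\<^sub>F z in at (0::complex). False" using ev by simp
    then show False by (simp add: trivial_limit_at)
  qed
  have R: "Im (hpart c (2 * s - 1) w0 (cnj w0)) = 0 \<and>
    Im ((\<Sum>i\<le>2 * s - 1. c i (2 * s - 1 - i) * w0^i * (of_nat (2 * s - 1 - i) * cnj w0^(2 * s - 1 - i - 1))) * g w0) \<ge> 0"
    if "norm w0 = 1" for w0
  proof -
    have "w0 \<noteq> 0" using that by auto
    from ray[OF m_gt g_hom p_low dN this ev] show ?thesis .
  qed
  show ?thesis
  proof
    show "complex_symmetric (\<lambda>k. c k (2 * s - 1 - k)) (2 * s - 1)"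
      by (rule symmetric_from_real) (use R in blast)
    show "\<forall>z. norm z = 1 \<longrightarrow> Im (deriv (\<lambda>w. hpart c (2 * s - 1) z w) (cnj z) * g z) \<ge> 0"
      using R by (simp add: hpart_deriv)
  qed
qed

end
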